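(* Suppose the execution of MaxHedge with parameters $s>1$ and $\rho$ is valid, and an online algorithm ALG with responses $P_j$ is cautious in every round up to and including round $i$ (with $i$ in the domain of MaxHedge). Let $\mathrm{ALG}'$ be the algorithm that responds with $Z_1,\dots,Z_{i-1}$ in rounds $1,\dots,i-1$ and with $P_i$ in round $i$. Then $\mathrm{ALG}(\mathbf X_i;\alpha)\ge\mathrm{ALG}'(\mathbf X_i;\alpha)$.
   Context: Fix $\alpha\in(0,\pi/4]$. A drone at $(t_x,t_y)$, $t_y\ge0$, covers $[t_x-t_y\tan\alpha,t_x+t_y\tan\alpha]$ on the $x$-axis; $\mathrm{FC}(X_0,\dots,X_i)$ denotes the set of positions covering $X_0,\dots,X_i$. Fix $s>1$ and the requests $X_0=(0,0)$, $X_i=(2(-s)^{i-1},0)$ for $i\ge1$; $\mathbf X_i=(X_0,\dots,X_i)$. Let $T_i$ be the apex of $\mathrm{FC}(X_0,\dots,X_i)$: $T_0=X_0$, $T_1=(1,\cot\alpha)$, $T_i=((-s)^{i-2}(1-s),\ s^{i-2}(1+s)\cot\alpha)$ for $i\ge2$. Let $o_i=|X_0T_i|$, the optimal offline cost for $\mathbf X_i$ ($o_0=0$). MaxHedge with parameter $\rho>0$: $Z_0=X_0$; for $i\ge1$, $Z_i=T_i+z_i(T_{i+1}-T_i)$ with $z_i\ge0$ is the intersection of the halfline from $T_i$ through $T_{i+1}$ with the circle centred at $Z_{i-1}$ of radius $\rho(o_i-o_{i-1})$; if no such point exists, MaxHedge fails in round $i$. Its domain is $\{0,\dots,i-1\}$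 if it fails in round $i$, and all rounds otherwise. The execution is valid if for every round $i\ge1$ in the domain, $Z_i$ lies on the same side of the $y$-axis as $T_i$. An online algorithm ALG responds with $P_0=X_0$ and $P_i\in\mathrm{FC}(X_0,\dots,X_i)$ chosen knowing only $X_0,\dots,X_i$; its cost on $\mathbf X_i$ is $\mathrm{ALG}(\mathbf X_i;\alpha)=\sum_{j=0}^{i-1}|P_jP_{j+1}|$. ALG is cautious in round $j$ if $P_j$ lies in the closed disk centred at $Z_{j-1}$ of radius $|Z_{j-1}Z_j|$. *)

theory Defs
  imports "HOL-Analysis.Analysis"
begin

type_synonym pt = "real \<times> real"

definition req :: "real \<Rightarrow> nat \<Rightarrow> pt" where
  "req s i = (if i = 0 then (0, 0) else (2 * (- s) ^ (i - 1), 0))"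

text \<open>Positions covering X_0..X_i (drone at (tx,ty), ty >= 0, covers [tx - ty tan a, tx + ty tan a]).\<close>
definition FC :: "real \<Rightarrow> real \<Rightarrow> nat \<Rightarrow> pt set" where
  "FC \<alpha> s i = {(tx, ty). ty \<ge> 0 \<and>
      (\<forall>j\<le>i. tx - ty * tan \<alpha> \<le> fst (req s j) \<and> fst (req s j) \<le> tx + ty * tan \<alpha>)}"

text \<open>Apex T_i of FC(X_0..X_i).\<close>
definition apex :: "real \<Rightarrow> real \<Rightarrow> nat \<Rightarrow> pt" where
  "apex \<alpha> s i = (if i = 0 then (0, 0)
     else if i = 1 then (1, cot \<alpha>)
     else ((- s) ^ (i - 2) * (1 - s), s ^ (i - 2) * (1 + s) * cot \<alpha>))"

text \<open>Optimal offline cost o_i = |X_0 T_i|.\<close>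
definition opt :: "real \<Rightarrow> real \<Rightarrow> nat \<Rightarrow> real" where
  "opt \<alpha> s i = dist (req s 0) (apex \<alpha> s i)"

definition mh_step :: "real \<Rightarrow> real \<Rightarrow> real \<Rightarrow> pt \<Rightarrow> nat \<Rightarrow> pt \<Rightarrow> bool" where
  "mh_step \<alpha> s \<rho> zprev i p \<longleftrightarrow>
     (\<exists>z\<ge>0. p = apex \<alpha> s i + z *\<^sub>R (apex \<alpha> s (Suc i) - apex \<alpha> s i)) \<and>
     dist zprev p = \<rho> * (opt \<alpha> s i - opt \<alpha> s (i - 1))"

definition mh_exec :: "real \<Rightarrow> real \<Rightarrow> real \<Rightarrow> (nat \<Rightarrow> pt) \<Rightarrow> bool" where
  "mh_exec \<alpha> s \<rho> Z \<longleftrightarrow> Z 0 = req s 0 \<and>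
     (\<forall>i\<ge>1. (\<forall>k\<in>{1..<i}. mh_step \<alpha> s \<rho> (Z (k - 1)) k (Z k)) \<and>
             (\<exists>p. mh_step \<alpha> s \<rho> (Z (i - 1)) i p)
             \<longrightarrow> mh_step \<alpha> s \<rho> (Z (i - 1)) i (Z i))"

definition mh_dom :: "real \<Rightarrow> real \<Rightarrow> real \<Rightarrow> (nat \<Rightarrow> pt) \<Rightarrow> nat \<Rightarrow> bool" where
  "mh_dom \<alpha> s \<rho> Z i \<longleftrightarrow> (\<forall>k\<in>{1..i}. mh_step \<alpha> s \<rho> (Z (k - 1)) k (Z k))"

definition mh_valid :: "real \<Rightarrow> real \<Rightarrow> real \<Rightarrow> (nat \<Rightarrow> pt) \<Rightarrow> bool" where
  "mh_valid \<alpha> s \<rho> Z \<longleftrightarrow>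
     (\<forall>i\<ge>1. mh_dom \<alpha> s \<rho> Z i \<longrightarrow> sgn (fst (Z i)) = sgn (fst (apex \<alpha> s i)))"

definition cost :: "(nat \<Rightarrow> pt) \<Rightarrow> nat \<Rightarrow> real" where
  "cost P i = (\<Sum>j<i. dist (P j) (P (Suc j)))"

definition cautious :: "(nat \<Rightarrow> pt) \<Rightarrow> (nat \<Rightarrow> pt) \<Rightarrow> nat \<Rightarrow> bool" where
  "cautious Z P j \<longleftrightarrow> dist (Z (j - 1)) (P j) \<le> dist (Z (j - 1)) (Z j)"

end

theory Submission
  imports Defs
begin


lemma cs2: fixes a b c d :: real shows "a*c + b*d \<le> sqrt(a\<^sup>2+b\<^sup>2) * sqrt(c\<^sup>2+d\<^sup>2)"
proof -
  have "(a*c+b*d)\<^sup>2 \<le> (a\<^sup>2+b\<^sup>2)*(c\<^sup>2+d\<^sup>2)"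
  proof -
    have "(a\<^sup>2+b\<^sup>2)*(c\<^sup>2+d\<^sup>2) = (a*c+b*d)\<^sup>2 + (a*d - b*c)\<^sup>2" by (simp add: power2_eq_square algebra_simps)
    thus ?thesis by simp
  qed
  hence "sqrt ((a*c+b*d)\<^sup>2) \<le> sqrt ((a\<^sup>2+b\<^sup>2)*(c\<^sup>2+d\<^sup>2))" by (rule real_sqrt_le_mono)
  thus ?thesis by (simp add: real_sqrt_mult)
qed

lemma core:
  fixes u1 u2 v1 v2 w1 w2 :: real
  assumes h1: "u1 \<ge> 0" and h2: "u2 \<le> 0" and h3: "v1 \<ge> 0" and h4: "v2 \<le> 0" and h5: "w2 \<le> 0"
    and wedge: "u2* v1 \<le> v2*u1"
    and disk: "(u1+w1)\<^sup>2 + (u2+w2)\<^sup>2 \<le> u1\<^sup>2 + u2\<^sup>2"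
  shows "sqrt(u1\<^sup>2+u2\<^sup>2) + sqrt(v1\<^sup>2+v2\<^sup>2) \<le> sqrt((u1+w1)\<^sup>2+(u2+w2)\<^sup>2) + sqrt((v1-w1)\<^sup>2+(v2-w2)\<^sup>2)"
proof -
  define U where "U = sqrt(u1\<^sup>2+u2\<^sup>2)"
  define V where "V = sqrt(v1\<^sup>2+v2\<^sup>2)"
  define X where "X = sqrt((u1+w1)\<^sup>2+(u2+w2)\<^sup>2)"
  define Y where "Y = sqrt((v1-w1)\<^sup>2+(v2-w2)\<^sup>2)"
  define W where "W = sqrt(w1\<^sup>2+w2\<^sup>2)"
  have U0: "U \<ge> 0" and V0: "V \<ge> 0" and X0: "X \<ge> 0" and Y0: "Y \<ge> 0" and W0: "W \<ge> 0"
    by (auto simp: U_def V_def X_def Y_def W_def)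
  have UU: "U * U = u1\<^sup>2+u2\<^sup>2" unfolding U_def using real_sqrt_mult_self[of "u1\<^sup>2+u2\<^sup>2"] by simp
  have VV: "V * V = v1\<^sup>2+v2\<^sup>2" unfolding V_def using real_sqrt_mult_self[of "v1\<^sup>2+v2\<^sup>2"] by simp
  have uw: "u2*w2 \<ge> 0" using h2 h5 by (simp add: mult_nonpos_nonpos)
  have w1: "w1 \<le> 0"
  proof (cases "u1 > 0")
    case True
    have "(u1+w1)\<^sup>2 + (u2+w2)\<^sup>2 = u1\<^sup>2 + u2\<^sup>2 + 2*(u1*w1) + 2*(u2*w2) + (w1\<^sup>2 + w2\<^sup>2)" by (simp add: power2_eq_square algebra_simps)
    hence "2*(u1*w1) \<le> 0" using disk uw by (smt (verit) zero_le_power2[of w1] zero_le_power2[of w2])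
    hence "u1*w1 \<le> 0" by simp
    thus ?thesis using True by (simp add: mult_le_0_iff)
  next
    case False
    hence "u1 = 0" using h1 by simp
    have "(u1+w1)\<^sup>2 + (u2+w2)\<^sup>2 = u1\<^sup>2 + u2\<^sup>2 + 2*(u1*w1) + 2*(u2*w2) + (w1\<^sup>2 + w2\<^sup>2)" by (simp add: power2_eq_square algebra_simps)
    hence "w1\<^sup>2 + w2\<^sup>2 \<le> 0" using disk uw \<open>u1 = 0\<close> by simp
    hence "w1 = 0" by (simp add: sum_power2_le_zero_iff)
    thus ?thesis by simp
  qed
  have cX: "U*X \<ge> U * U + (u1*w1+u2*w2)"
    using cs2[of u1 "u1+w1" u2 "u2+w2"] UU unfolding U_def X_def by (simp add: algebra_simps power2_eq_square)
  have cY: "V*Y \<ge> V * V - (v1*w1+v2*w2)"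
    using cs2[of v1 "v1-w1" v2 "v2-w2"] VV unfolding V_def Y_def by (simp add: algebra_simps power2_eq_square)
  show ?thesis
  proof (cases "U = 0")
    case True
    hence "u1\<^sup>2+u2\<^sup>2 = 0" using UU by simp
    hence "u1 = 0" "u2 = 0" by (auto simp: add_nonneg_eq_0_iff)
    hence "w1\<^sup>2+w2\<^sup>2 \<le> 0" using disk by simp
    hence "w1 = 0" "w2 = 0" by (simp_all add: sum_power2_le_zero_iff)
    thus ?thesis using \<open>u1 = 0\<close> \<open>u2 = 0\<close> by simp
  next
    case Upos: False
    hence Up: "U > 0" using U0 by simp
    show ?thesis
    proof (cases "V = 0")
      case True
      hence "v1\<^sup>2+v2\<^sup>2 = 0" using VV by simp
      hence v: "v1 = 0" "v2 = 0" by (auto simp: add_nonneg_eq_0_iff)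
      have "u1*(-w1) + u2*(-w2) \<le> U * W" using cs2[of u1 "-w1" u2 "-w2"] unfolding U_def W_def by simp
      hence "U*X \<ge> U * U - U*W" using cX by simp
      hence "U*(U-W) \<le> U*X" by (simp add: right_diff_distrib)
      hence "X \<ge> U - W" using Up by (simp add: mult_le_cancel_left_pos)
      moreover have "Y = W" unfolding Y_def W_def using v by simp
      ultimately show ?thesis unfolding U_def[symmetric] V_def[symmetric] X_def[symmetric] Y_def[symmetric] using True by simp
    next
      case False
      hence Vp: "V > 0" using V0 by simp
      have q: "(-v2)*u1 \<le> (-u2)* v1" using wedge by simp
      have q0: "0 \<le> (-v2)*u1" using mult_nonpos_nonneg[OF h4 h1] by simp
      have sq: "(u1* v2)\<^sup>2 \<le> (u2* v1)\<^sup>2"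
      proof -
        have "((-v2)*u1)\<^sup>2 \<le> ((-u2)* v1)\<^sup>2" using power_mono[OF q q0, of 2] .
        thus ?thesis by (simp add: power2_eq_square algebra_simps)
      qed
      have k1: "u1 * V \<le> v1 * U"
      proof (rule power2_le_imp_le)
        show "(u1 * V)\<^sup>2 \<le> (v1 * U)\<^sup>2" using sq VV UU
          by (simp add: power_mult_distrib) (simp add: power2_eq_square algebra_simps)
        show "0 \<le> v1 * U" using h3 U0 by simp
      qed
      have k2: "(-v2) * U \<le> (-u2) * V"
      proof (rule power2_le_imp_le)
        show "((-v2) * U)\<^sup>2 \<le> ((-u2) * V)\<^sup>2" using sq VV UU
          by (simp add: power_mult_distrib) (simp add: power2_eq_square algebra_simps)
        show "0 \<le> (-u2) * V" using mult_nonpos_nonneg[OF h2 V0] by simp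
      qed
      have key: "V*(u1*w1+u2*w2) - U*(v1*w1+v2*w2) \<ge> 0"
      proof -
        have e: "V*(u1*w1+u2*w2) - U*(v1*w1+v2*w2) = w1*(u1 * V - v1 * U) + (-w2)*((-u2) * V - (-v2) * U)"
          by (simp add: algebra_simps)
        have "w1*(u1 * V - v1 * U) \<ge> 0" using w1 k1 by (simp add: mult_nonpos_nonpos)
        moreover have "(-w2)*((-u2) * V - (-v2) * U) \<ge> 0" 
          by (rule mult_nonneg_nonneg) (use h5 k2 in linarith)+
        ultimately show ?thesis using e by linarith
      qed
      have a1: "V*(U*X) \<ge> V*(U*U + (u1*w1+u2*w2))" using cX V0 by (rule mult_left_mono)
      have a2: "U*(V*Y) \<ge> U*(V*V - (v1*w1+v2*w2))" using cY U0 by (rule mult_left_mono)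
      have "(U*V)*(U+V) \<le> (U*V)*(X+Y)"
      proof -
        have "(U*V)*(X+Y) = V*(U*X) + U*(V*Y)" by (simp add: algebra_simps)
        moreover have "V*(U*U + (u1*w1+u2*w2)) + U*(V*V - (v1*w1+v2*w2)) = (U*V)*(U+V) + (V*(u1*w1+u2*w2) - U*(v1*w1+v2*w2))"
          by (simp add: algebra_simps)
        ultimately show ?thesis using a1 a2 key by linarith
      qed
      hence "U+V \<le> X+Y" using Up Vp by (simp add: mult_le_cancel_left_pos)
      thus ?thesis unfolding U_def V_def X_def Y_def .
    qed
  qed
qed
definition Nf :: "real \<Rightarrow> real \<Rightarrow> real \<Rightarrow> real" where
  "Nf c x y = c\<^sup>2*(x+y)\<^sup>2 + (x-y)\<^sup>2"

lemma Nf_iden: "((1-c\<^sup>2)*x - (1+c\<^sup>2)*y)\<^sup>2 + (-2*c*x)\<^sup>2 = (1+c\<^sup>2) * Nf c x y"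
  unfolding Nf_def by (simp add: power2_eq_square algebra_simps)

lemma Nf_alt: "Nf c p (-Y) = (1+c\<^sup>2)*(p\<^sup>2+Y\<^sup>2) + 2*(1-c\<^sup>2)*(p*Y)"
  unfolding Nf_def by (simp add: power2_eq_square algebra_simps)

lemma step_sd:
  fixes c s a b sA dA sB dB sC dC sP dP sQ dQ :: real
  assumes c0: "c > 0" and c1: "c \<le> 1" and s1: "s > 1" and a0: "a > 0" and b0: "0 \<le> b" and ba: "b \<le> a"
    and A1: "dA = -b" and A2: "sA + dA \<le> 0"
    and B1: "sB = a" and B2: "dB \<le> -b" and B3: "sB + dB \<ge> 0"
    and C1: "dC = -a * s" and C2: "sC \<ge> a" and C3: "sC + dC \<le> 0"
    and P1: "sP \<ge> a" and Q1: "sQ \<ge> a" and Q2: "dQ \<le> -a * s"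
    and diskP: "Nf c (sP-sA) (dP-dA) \<le> Nf c (sB-sA) (dB-dA)"
    and diskQ: "Nf c (sQ-sB) (dQ-dB) \<le> Nf c (sC-sB) (dC-dB)"
  shows "sqrt (Nf c (sB-sA) (dB-dA)) + sqrt (Nf c (sQ-sB) (dQ-dB))
       \<le> sqrt (Nf c (sP-sA) (dP-dA)) + sqrt (Nf c (sQ-sP) (dQ-dP))"
proof -
  define p where "p = 1 - c\<^sup>2"
  define q where "q = 1 + c\<^sup>2"
  have p0: "p \<ge> 0" unfolding p_def using c0 c1 by (simp add: power_le_one)
  have q0: "q > 0" unfolding q_def by (simp add: add_pos_nonneg)
  have as: "a \<le> a * s" using a0 s1 by simp
  define u1 where "u1 = p*(sB-sA) - q*(dB-dA)"
  define u2 where "u2 = -2*c*(sB-sA)"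
  define v1 where "v1 = p*(sQ-sB) - q*(dQ-dB)"
  define v2 where "v2 = -2*c*(sQ-sB)"
  define w1 where "w1 = p*(sP-sB) - q*(dP-dB)"
  define w2 where "w2 = -2*c*(sP-sB)"
  have hu1: "u1 \<ge> 0" unfolding u1_def
  proof -
    have "p*(sB-sA) \<ge> 0" using p0 A1 A2 B1 ba by simp
    moreover have "q*(dB-dA) \<le> 0" by (rule mult_nonneg_nonpos) (use q0 A1 B2 in linarith)+
    ultimately show "p*(sB-sA) - q*(dB-dA) \<ge> 0" by linarith
  qed
  have hu2: "u2 \<le> 0" unfolding u2_def using c0 A1 A2 B1 ba by (simp add: mult_nonneg_nonneg)
  have hv1: "v1 \<ge> 0" unfolding v1_def
  proof -
    have "p*(sQ-sB) \<ge> 0" using p0 Q1 B1 by simp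
    moreover have "q*(dQ-dB) \<le> 0" by (rule mult_nonneg_nonpos) (use q0 Q2 B1 B3 as in linarith)+
    ultimately show "p*(sQ-sB) - q*(dQ-dB) \<ge> 0" by linarith
  qed
  have hv2: "v2 \<le> 0" unfolding v2_def using c0 Q1 B1 by simp
  have hw2: "w2 \<le> 0" unfolding w2_def using c0 P1 B1 by simp
  have e_uw1: "u1 + w1 = p*(sP-sA) - q*(dP-dA)" unfolding u1_def w1_def by (simp add: algebra_simps)
  have e_uw2: "u2 + w2 = -2*c*(sP-sA)" unfolding u2_def w2_def by (simp add: algebra_simps)
  have e_vw1: "v1 - w1 = p*(sQ-sP) - q*(dQ-dP)" unfolding v1_def w1_def by (simp add: algebra_simps)
  have e_vw2: "v2 - w2 = -2*c*(sQ-sP)" unfolding v2_def w2_def by (simp add: algebra_simps)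
  have I: "\<And>x y. (p*x - q*y)\<^sup>2 + (-2*c*x)\<^sup>2 = q * Nf c x y"
    unfolding p_def q_def by (rule Nf_iden)
  have nu: "u1\<^sup>2 + u2\<^sup>2 = q * Nf c (sB-sA) (dB-dA)" unfolding u1_def u2_def by (rule I)
  have nv: "v1\<^sup>2 + v2\<^sup>2 = q * Nf c (sQ-sB) (dQ-dB)" unfolding v1_def v2_def by (rule I)
  have nuw: "(u1+w1)\<^sup>2 + (u2+w2)\<^sup>2 = q * Nf c (sP-sA) (dP-dA)" unfolding e_uw1 e_uw2 by (rule I)
  have nvw: "(v1-w1)\<^sup>2 + (v2-w2)\<^sup>2 = q * Nf c (sQ-sP) (dQ-dP)" unfolding e_vw1 e_vw2 by (rule I)
  have disk: "(u1+w1)\<^sup>2 + (u2+w2)\<^sup>2 \<le> u1\<^sup>2 + u2\<^sup>2"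
    unfolding nuw nu using diskP q0 by simp
  have sQC: "sQ \<le> sC"
  proof (rule ccontr)
    assume "\<not> sQ \<le> sC"
    hence lt: "sC < sQ" by simp
    define p1 where "p1 = sQ - sB"
    define q1 where "q1 = sC - sB"
    define Y where "Y = dB - dQ"
    define Y0 where "Y0 = dB - dC"
    have q10: "0 \<le> q1" and pq: "q1 < p1" unfolding p1_def q1_def using C2 B1 lt by auto
    have Y00: "0 \<le> Y0" and YY: "Y0 \<le> Y" unfolding Y0_def Y_def using C1 B1 B3 as Q2 by auto
    have e1: "Nf c (sQ-sB) (dQ-dB) = (1+c\<^sup>2)*(p1\<^sup>2+Y\<^sup>2) + 2*(1-c\<^sup>2)*(p1*Y)"
      using Nf_alt[of c p1 Y] unfolding p1_def Y_def by simp
    have e2: "Nf c (sC-sB) (dC-dB) = (1+c\<^sup>2)*(q1\<^sup>2+Y0\<^sup>2) + 2*(1-c\<^sup>2)*(q1*Y0)"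
      using Nf_alt[of c q1 Y0] unfolding q1_def Y0_def by simp
    have "q1\<^sup>2 < p1\<^sup>2" using q10 pq by (simp add: power_strict_mono)
    moreover have "Y0\<^sup>2 \<le> Y\<^sup>2" using Y00 YY by (simp add: power_mono)
    moreover have "q1*Y0 \<le> p1*Y" using q10 pq Y00 YY by (meson less_imp_le mult_mono order_trans)
    ultimately have "(1+c\<^sup>2)*(q1\<^sup>2+Y0\<^sup>2) < (1+c\<^sup>2)*(p1\<^sup>2+Y\<^sup>2)"
      and "2*(1-c\<^sup>2)*(q1*Y0) \<le> 2*(1-c\<^sup>2)*(p1*Y)"
      using q0 p0 unfolding q_def p_def by (simp_all add: mult_left_mono)
    hence "Nf c (sC-sB) (dC-dB) < Nf c (sQ-sB) (dQ-dB)" using e1 e2 by linarith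
    thus False using diskQ by simp
  qed
  have wedge: "u2* v1 \<le> v2*u1"
  proof -
    have e: "v2*u1 - u2* v1 = 2*c*q*((sQ-sB)*(dB-dA) - (sB-sA)*(dQ-dB))"
      unfolding u1_def u2_def v1_def v2_def by (simp add: algebra_simps)
    have m1: "(a - sA)*(dB - dQ) \<ge> (a-b)*(dB + a * s)"
      by (rule mult_mono) (use A1 A2 B1 B3 ba Q2 as in linarith)+
    have m2: "(a-b)*(dB + a * s) - a*(s-1)*(-b-dB) = (a + dB)*(a * s - b)" by (simp add: algebra_simps)
    have m3: "(a + dB)*(a * s - b) \<ge> 0" using B1 B3 as ba by simp
    have m4: "a*(s-1)*(-b-dB) \<ge> (sC - a)*(-b-dB)"
      by (rule mult_right_mono) (use C1 C3 B2 in \<open>simp_all add: algebra_simps\<close>)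
    have m5: "(sC - a)*(-b-dB) \<ge> (sQ - a)*(-b-dB)"
      by (rule mult_right_mono) (use sQC B2 in simp_all)
    have "(sQ-sB)*(dB-dA) - (sB-sA)*(dQ-dB) = (a - sA)*(dB - dQ) - (sQ - a)*(-b-dB)"
      using A1 B1 by (simp add: algebra_simps)
    hence "(sQ-sB)*(dB-dA) - (sB-sA)*(dQ-dB) \<ge> 0" using m1 m2 m3 m4 m5 by linarith
    hence "v2*u1 - u2* v1 \<ge> 0" unfolding e using c0 q0 by simp
    thus ?thesis by simp
  qed
  have main: "sqrt(u1\<^sup>2+u2\<^sup>2) + sqrt(v1\<^sup>2+v2\<^sup>2) \<le> sqrt((u1+w1)\<^sup>2+(u2+w2)\<^sup>2) + sqrt((v1-w1)\<^sup>2+(v2-w2)\<^sup>2)"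
    by (rule core[OF hu1 hu2 hv1 hv2 hw2 wedge disk])
  hence "sqrt q * sqrt (Nf c (sB-sA) (dB-dA)) + sqrt q * sqrt (Nf c (sQ-sB) (dQ-dB))
       \<le> sqrt q * sqrt (Nf c (sP-sA) (dP-dA)) + sqrt q * sqrt (Nf c (sQ-sP) (dQ-dP))"
    unfolding nu nv nuw nvw by (simp add: real_sqrt_mult)
  hence "sqrt q * (sqrt (Nf c (sB-sA) (dB-dA)) + sqrt (Nf c (sQ-sB) (dQ-dB)))
       \<le> sqrt q * (sqrt (Nf c (sP-sA) (dP-dA)) + sqrt (Nf c (sQ-sP) (dQ-dP)))"
    by (simp add: distrib_left)
  thus ?thesis using q0 by (simp add: mult_le_cancel_left_pos)
qed


definition eps :: "nat \<Rightarrow> real" where "eps k = (-1)^(k+1)"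
definition sg :: "real \<Rightarrow> nat \<Rightarrow> real \<times> real \<Rightarrow> real" where "sg c k p = eps k * fst p + c * snd p"
definition dl :: "real \<Rightarrow> nat \<Rightarrow> real \<times> real \<Rightarrow> real" where "dl c k p = eps k * fst p - c * snd p"
definition aa :: "real \<Rightarrow> nat \<Rightarrow> real" where "aa s k = 2 * s^(k-1)"
definition bb :: "real \<Rightarrow> nat \<Rightarrow> real" where "bb s k = (if k = 1 then 0 else 2 * s^(k-2))"

lemma eps_Suc: "eps (Suc k) = - eps k" unfolding eps_def by simp
lemma eps_cases: "eps k = 1 \<or> eps k = -1" unfolding eps_def minus_one_power_iff by simp
lemma eps_pow: "eps m * (-s)^m = - (s^m)"
proof -
  have "eps m * (-s)^m = - (((-1)^m * (-1)^m) * s^m)" unfolding eps_def power_minus[of s m] by (simp add: algebra_simps)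
  thus ?thesis by simp
qed
lemma sg_Suc: "sg c (Suc k) p = - dl c k p" unfolding sg_def dl_def eps_Suc by simp
lemma dl_Suc: "dl c (Suc k) p = - sg c k p" unfolding sg_def dl_def eps_Suc by simp
lemma aa_Suc: "k \<ge> 1 \<Longrightarrow> aa s (Suc k) = s * aa s k"
  unfolding aa_def by (cases k) auto
lemma bb_Suc: "k \<ge> 1 \<Longrightarrow> bb s (Suc k) = aa s k"
  unfolding aa_def bb_def by (cases k) auto

lemma tan_cot_one: "0 < \<alpha> \<Longrightarrow> \<alpha> < pi/2 \<Longrightarrow> tan \<alpha> * cot \<alpha> = 1"
  using tan_gt_zero[of \<alpha>] by (simp add: cot_altdef)

lemma apex_frame:
  assumes "0 < \<alpha>" "\<alpha> < pi/2" "k \<ge> 1"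
  shows "sg (tan \<alpha>) k (apex \<alpha> s k) = aa s k \<and> dl (tan \<alpha>) k (apex \<alpha> s k) = - bb s k"
proof -
  have tc: "tan \<alpha> * cot \<alpha> = 1" using assms tan_cot_one by blast
  show ?thesis
  proof (cases "k = 1")
    case True
    thus ?thesis using tc by (simp add: sg_def dl_def eps_def apex_def aa_def bb_def)
  next
    case False
    then obtain m where k: "k = Suc (Suc m)" using assms(3) by (metis One_nat_def Suc_le_D le_SucE nat.inject not_less_eq_eq)
    have ek: "eps k = eps m" unfolding k eps_Suc by simp
    have e1: "eps k * ((-s)^m * (1-s)) = s^m * (s - 1)" using eps_pow[of m s] unfolding ek
      by (simp add: algebra_simps)
    have e2: "tan \<alpha> * (s^m * (1+s) * cot \<alpha>) = s^m*(1+s)"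
    proof -
      have "tan \<alpha> * (s^m * (1+s) * cot \<alpha>) = (tan \<alpha> * cot \<alpha>) * (s^m*(1+s))" by (simp only: ac_simps)
      thus ?thesis using tc by simp
    qed
    have ap: "apex \<alpha> s k = ((-s)^m * (1-s), s^m * (1+s) * cot \<alpha>)" unfolding k apex_def by simp
    show ?thesis unfolding ap sg_def dl_def using e1 e2 False
      by (simp add: aa_def bb_def k algebra_simps)
  qed
qed


lemma req_frame: "j \<ge> 1 \<Longrightarrow> eps j * fst (req s j) = aa s j"
proof -
  assume "j \<ge> 1"
  then obtain m where j: "j = Suc m" by (cases j) auto
  have "eps j * fst (req s j) = - (2 * (eps m * (-s)^m))" unfolding j req_def eps_Suc by simp
  also have "\<dots> = 2 * s^m" using eps_pow[of m s] by simp
  finally show ?thesis unfolding aa_def j by simp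
qed

lemma FC_frame:
  assumes "p \<in> FC \<alpha> s j" "1 \<le> j'" "j' \<le> j"
  shows "aa s j' \<le> sg (tan \<alpha>) j' p"
proof -
  obtain tx ty where p: "p = (tx, ty)" by (cases p)
  have h: "tx - ty * tan \<alpha> \<le> fst (req s j') \<and> fst (req s j') \<le> tx + ty * tan \<alpha>"
    using assms(1,3) unfolding p FC_def by auto
  have r: "eps j' * fst (req s j') = aa s j'" using req_frame assms(2) by blast
  from eps_cases[of j'] show ?thesis
  proof
    assume e: "eps j' = 1"
    thus ?thesis using h r unfolding sg_def p by (simp add: algebra_simps)
  next
    assume e: "eps j' = -1"
    thus ?thesis using h r unfolding sg_def p by (simp add: algebra_simps)
  qed
qed

lemma sg_lin: "sg c k (p + z *\<^sub>R (q - p)) = sg c k p + z * (sg c k q - sg c k p)"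
  unfolding sg_def by (simp add: algebra_simps)
lemma dl_lin: "dl c k (p + z *\<^sub>R (q - p)) = dl c k p + z * (dl c k q - dl c k p)"
  unfolding dl_def by (simp add: algebra_simps)

lemma dist_pt: "dist (p::real\<times>real) q = sqrt ((fst p - fst q)\<^sup>2 + (snd p - snd q)\<^sup>2)"
  by (simp add: dist_prod_def dist_real_def)

lemma Nf_dist: "Nf c (sg c k p - sg c k q) (dl c k p - dl c k q) = (2*c*dist p q)\<^sup>2"
proof -
  have S: "(dist p q)\<^sup>2 = (fst p - fst q)\<^sup>2 + (snd p - snd q)\<^sup>2" unfolding dist_pt by simp
  from eps_cases[of k] show ?thesis
  proof
    assume "eps k = 1"
    thus ?thesis unfolding Nf_def sg_def dl_def power_mult_distrib S by (simp add: power2_eq_square algebra_simps)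
  next
    assume "eps k = -1"
    thus ?thesis unfolding Nf_def sg_def dl_def power_mult_distrib S by (simp add: power2_eq_square algebra_simps)
  qed
qed

lemma sgn_side: "sgn x = sgn t \<Longrightarrow> e * t > 0 \<Longrightarrow> (e = 1 \<or> e = -1) \<Longrightarrow> e * x > (0::real)"
  by (auto simp: sgn_if split: if_splits)

lemma step_geo:
  fixes c s a b :: real and k :: nat and A B C P Q :: "real \<times> real"
  assumes c0: "c > 0" and c1: "c \<le> 1" and s1: "s > 1" and a0: "a > 0" and b0: "0 \<le> b" and ba: "b \<le> a"
    and A1: "dl c k A = -b" and A2: "sg c k A + dl c k A \<le> 0"
    and B1: "sg c k B = a" and B2: "dl c k B \<le> -b" and B3: "sg c k B + dl c k B \<ge> 0"
    and C1: "dl c k C = -a * s" and C2: "sg c k C \<ge> a" and C3: "sg c k C + dl c k C \<le> 0"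
    and P1: "sg c k P \<ge> a" and Q1: "sg c k Q \<ge> a" and Q2: "dl c k Q \<le> -a * s"
    and dP: "dist A P \<le> dist A B" and dQ: "dist B Q \<le> dist B C"
  shows "dist A B + dist B Q \<le> dist A P + dist P Q"
proof -
  have sq: "\<And>X Y. sqrt (Nf c (sg c k X - sg c k Y) (dl c k X - dl c k Y)) = 2*c*dist X Y"
    unfolding Nf_dist using c0 by simp
  have mono: "\<And>X Y X' Y'. dist X Y \<le> dist X' Y' \<Longrightarrow>
      Nf c (sg c k X - sg c k Y) (dl c k X - dl c k Y) \<le> Nf c (sg c k X' - sg c k Y') (dl c k X' - dl c k Y')"
    unfolding Nf_dist using c0 by (intro power_mono) simp_all
  have dP': "dist P A \<le> dist B A" using dP by (simp add: dist_commute)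
  have dQ': "dist Q B \<le> dist C B" using dQ by (simp add: dist_commute)
  have "sqrt (Nf c (sg c k B - sg c k A) (dl c k B - dl c k A)) + sqrt (Nf c (sg c k Q - sg c k B) (dl c k Q - dl c k B))
       \<le> sqrt (Nf c (sg c k P - sg c k A) (dl c k P - dl c k A)) + sqrt (Nf c (sg c k Q - sg c k P) (dl c k Q - dl c k P))"
    by (rule step_sd[OF c0 c1 s1 a0 b0 ba A1 A2 B1 B2 B3 C1 C2 C3 P1 Q1 Q2 mono[OF dP'] mono[OF dQ']])
  hence "2*c*dist B A + 2*c*dist Q B \<le> 2*c*dist P A + 2*c*dist Q P" unfolding sq .
  hence "(2*c)*(dist A B + dist B Q) \<le> (2*c)*(dist A P + dist P Q)"
    by (simp add: dist_commute distrib_left)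
  thus ?thesis using c0 by (simp add: mult_le_cancel_left_pos)
qed


lemma ab_facts: "s > 1 \<Longrightarrow> k \<ge> 1 \<Longrightarrow> 0 \<le> bb s k \<and> bb s k < aa s k \<and> 0 < aa s k"
proof -
  assume s1: "s > 1" and k1: "k \<ge> 1"
  show ?thesis
  proof (cases "k = 1")
    case True thus ?thesis by (simp add: aa_def bb_def)
  next
    case False
    then obtain m where k: "k = Suc (Suc m)" using k1 by (metis One_nat_def Suc_le_D le_SucE nat.inject not_less_eq_eq)
    have "s^m > 0" using s1 by simp
    hence "s^m < s * s^m" using s1 by simp
    thus ?thesis unfolding k aa_def bb_def using s1 by simp
  qed
qed

lemma sum_sd: "sg c k p + dl c k p = 2 * (eps k * fst p)" by (simp add: sg_def dl_def)

lemma mh_step_ray: "mh_step \<alpha> s \<rho> zp i p \<Longrightarrow> \<exists>z\<ge>0. p = apex \<alpha> s i + z *\<^sub>R (apex \<alpha> s (Suc i) - apex \<alpha> s i)"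
  unfolding mh_step_def by blast

lemma step_main:
  fixes \<alpha> s \<rho> :: real and Z P :: "nat \<Rightarrow> real \<times> real" and i k :: nat
  assumes a0: "0 < \<alpha>" and a4: "\<alpha> \<le> pi / 4" and s1: "s > 1"
    and ex: "mh_exec \<alpha> s \<rho> Z" and val: "mh_valid \<alpha> s \<rho> Z"
    and dom: "mh_dom \<alpha> s \<rho> Z i"
    and PFC: "\<forall>j. P j \<in> FC \<alpha> s j"
    and cau: "\<forall>j\<in>{1..i}. cautious Z P j"
    and k1: "1 \<le> k" and ki: "Suc k \<le> i"
  shows "dist (Z (k-1)) (Z k) + dist (Z k) (P (Suc k)) \<le> dist (Z (k-1)) (P k) + dist (P k) (P (Suc k))"
proof -
  define c where "c = tan \<alpha>"
  have pi2: "\<alpha> < pi/2" using a4 pi_gt_zero by linarith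
  have c0: "c > 0" unfolding c_def using tan_gt_zero a0 pi2 by blast
  have c1: "c \<le> 1" unfolding c_def using tan_mono_le[of \<alpha> "pi/4"] a0 a4 tan_45 by simp
  define a where "a = aa s k"
  define b where "b = bb s k"
  have abf: "0 \<le> b" "b < a" "0 < a" using ab_facts[OF s1 k1] unfolding a_def b_def by auto
  have as: "a \<le> s * a" using abf s1 by simp
  have stp: "\<And>j. 1 \<le> j \<Longrightarrow> j \<le> i \<Longrightarrow> mh_step \<alpha> s \<rho> (Z (j-1)) j (Z j)"
    using dom unfolding mh_dom_def by auto
  have side: "\<And>j. 1 \<le> j \<Longrightarrow> j \<le> i \<Longrightarrow> eps j * fst (Z j) > 0"
  proof -
    fix j assume j1: "1 \<le> j" and ji: "j \<le> i"
    have "mh_dom \<alpha> s \<rho> Z j" using dom ji unfolding mh_dom_def by auto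
    hence sgn: "sgn (fst (Z j)) = sgn (fst (apex \<alpha> s j))" using val j1 unfolding mh_valid_def by auto
    have "sg c j (apex \<alpha> s j) + dl c j (apex \<alpha> s j) = aa s j - bb s j"
      using apex_frame[OF a0 pi2 j1] unfolding c_def by simp
    hence "eps j * fst (apex \<alpha> s j) > 0" using ab_facts[OF s1 j1] unfolding sum_sd by simp
    thus "eps j * fst (Z j) > 0" using sgn_side[OF sgn _ eps_cases] by blast
  qed
  have Tk: "sg c k (apex \<alpha> s k) = a" "dl c k (apex \<alpha> s k) = -b"
    using apex_frame[OF a0 pi2 k1] unfolding c_def a_def b_def by auto
  have T1: "sg c k (apex \<alpha> s (Suc k)) = a" "dl c k (apex \<alpha> s (Suc k)) = -(s*a)"
    using apex_frame[OF a0 pi2, of "Suc k" s] k1 aa_Suc[OF k1, of s] bb_Suc[OF k1, of s]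
    unfolding c_def a_def sg_Suc dl_Suc by auto
  have k2: "1 \<le> Suc k" by simp
  have T2: "sg c k (apex \<alpha> s (Suc (Suc k))) = s*(s*a)" "dl c k (apex \<alpha> s (Suc (Suc k))) = -(s*a)"
    using apex_frame[OF a0 pi2, of "Suc (Suc k)" s] aa_Suc[OF k2, of s] bb_Suc[OF k2, of s] aa_Suc[OF k1, of s]
    unfolding c_def a_def sg_Suc dl_Suc by auto
  obtain z where z0: "z \<ge> 0" and zB: "Z k = apex \<alpha> s k + z *\<^sub>R (apex \<alpha> s (Suc k) - apex \<alpha> s k)"
    using mh_step_ray[OF stp[OF k1]] ki by auto
  have B1: "sg c k (Z k) = a" unfolding zB sg_lin Tk T1 by simp
  have B2: "dl c k (Z k) \<le> -b"
  proof -
    have "z * (-(s*a) - -b) \<le> 0" by (rule mult_nonneg_nonpos) (use z0 as abf in linarith)+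
    thus ?thesis unfolding zB dl_lin Tk T1 by simp
  qed
  have B3: "sg c k (Z k) + dl c k (Z k) \<ge> 0" unfolding sum_sd using side[OF k1] ki by simp
  obtain t where t0: "t \<ge> 0" and tC: "Z (Suc k) = apex \<alpha> s (Suc k) + t *\<^sub>R (apex \<alpha> s (Suc (Suc k)) - apex \<alpha> s (Suc k))"
    using mh_step_ray[OF stp[OF k2 ki]] by auto
  have C1: "dl c k (Z (Suc k)) = -a * s" unfolding tC dl_lin T1 T2 by simp
  have C2: "sg c k (Z (Suc k)) \<ge> a"
  proof -
    have "1*(s*a) \<le> s*(s*a)" by (rule mult_right_mono) (use s1 abf as in linarith)+
    hence "s*(s*a) \<ge> a" using as by simp
    hence "t * (s*(s*a) - a) \<ge> 0" using t0 by simp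
    thus ?thesis unfolding tC sg_lin T1 T2 by simp
  qed
  have C3: "sg c k (Z (Suc k)) + dl c k (Z (Suc k)) \<le> 0"
    unfolding sum_sd using side[OF k2 ki] unfolding eps_Suc by simp
  have A: "dl c k (Z (k-1)) = -b \<and> sg c k (Z (k-1)) + dl c k (Z (k-1)) \<le> 0"
  proof (cases "k = 1")
    case True
    have "Z 0 = (0,0)" using ex unfolding mh_exec_def req_def by simp
    thus ?thesis using True unfolding b_def bb_def sg_def dl_def by simp
  next
    case False
    then obtain j where kj: "k = Suc j" and j1: "1 \<le> j" using k1 by (cases k) auto
    obtain w where w0: "w \<ge> 0" and wA: "Z j = apex \<alpha> s j + w *\<^sub>R (apex \<alpha> s (Suc j) - apex \<alpha> s j)"
      using mh_step_ray[OF stp[OF j1]] ki kj by auto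
    have Tj: "dl c k (apex \<alpha> s j) = -b"
      using apex_frame[OF a0 pi2 j1, of s] bb_Suc[OF j1, of s] unfolding c_def b_def kj dl_Suc by auto
    have "dl c k (Z j) = -b" unfolding wA dl_lin using Tj Tk unfolding kj by simp
    moreover have "eps j * fst (Z j) > 0" using side[OF j1] ki kj by simp
    hence "sg c k (Z j) + dl c k (Z j) \<le> 0" unfolding sum_sd kj eps_Suc by simp
    ultimately show ?thesis using kj by simp
  qed
  have P1: "sg c k (P k) \<ge> a" using FC_frame[OF spec[OF PFC, of k] k1] unfolding a_def c_def by simp
  have Q1: "sg c k (P (Suc k)) \<ge> a" using FC_frame[OF spec[OF PFC, of "Suc k"] k1] unfolding a_def c_def by simp
  have Q2: "dl c k (P (Suc k)) \<le> -a * s"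
    using FC_frame[OF spec[OF PFC, of "Suc k"] k2] aa_Suc[OF k1, of s] unfolding a_def c_def sg_Suc by (simp add: mult.commute)
  have dP: "dist (Z (k-1)) (P k) \<le> dist (Z (k-1)) (Z k)" using cau k1 ki unfolding cautious_def by auto
  have dQ: "dist (Z k) (P (Suc k)) \<le> dist (Z k) (Z (Suc k))" 
  proof -
    have "Suc k \<in> {1..i}" using ki by simp
    hence "cautious Z P (Suc k)" using cau by blast
    thus ?thesis unfolding cautious_def by simp
  qed
  show ?thesis
    by (rule step_geo[OF c0 c1 s1 abf(3) abf(1) less_imp_le[OF abf(2)] A[THEN conjunct1] A[THEN conjunct2]
          B1 B2 B3 C1 C2 C3 P1 Q1 Q2 dP dQ])
qed


theorem lemma13:
  fixes \<alpha> s \<rho> :: real and Z P :: "nat \<Rightarrow> real \<times> real" and i :: nat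
  assumes "0 < \<alpha>" and "\<alpha> \<le> pi / 4" and "s > 1" and "\<rho> > 0"
    and "mh_exec \<alpha> s \<rho> Z" and "mh_valid \<alpha> s \<rho> Z"
    and "mh_dom \<alpha> s \<rho> Z i"
    and "P 0 = req s 0" and "\<forall>j. P j \<in> FC \<alpha> s j"
    and "\<forall>j\<in>{1..i}. cautious Z P j"
  shows "cost P i \<ge> cost (\<lambda>j. if j < i then Z j else P i) i"
proof (cases i)
  case 0
  thus ?thesis by (simp add: cost_def)
next
  case (Suc n)
  have Z0: "Z 0 = P 0" using assms(5,8) unfolding mh_exec_def by simp
  have claim: "\<And>m. Suc m \<le> i \<Longrightarrow>
      (\<Sum>j<m. dist (Z j) (Z (Suc j))) + dist (Z m) (P (Suc m)) \<le> cost P (Suc m)"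
  proof -
    fix m show "Suc m \<le> i \<Longrightarrow> (\<Sum>j<m. dist (Z j) (Z (Suc j))) + dist (Z m) (P (Suc m)) \<le> cost P (Suc m)"
    proof (induction m)
      case 0
      thus ?case using Z0 by (simp add: cost_def)
    next
      case (Suc m)
      have IH: "(\<Sum>j<m. dist (Z j) (Z (Suc j))) + dist (Z m) (P (Suc m)) \<le> cost P (Suc m)"
        using Suc by simp
      have st: "dist (Z (Suc m - 1)) (Z (Suc m)) + dist (Z (Suc m)) (P (Suc (Suc m)))
          \<le> dist (Z (Suc m - 1)) (P (Suc m)) + dist (P (Suc m)) (P (Suc (Suc m)))"
        by (rule step_main[OF assms(1,2,3,5,6,7,9,10)]) (use Suc.prems in simp_all)
      have "cost P (Suc (Suc m)) = cost P (Suc m) + dist (P (Suc m)) (P (Suc (Suc m)))"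
        by (simp add: cost_def)
      thus ?case using IH st by simp
    qed
  qed
  have "cost (\<lambda>j. if j < i then Z j else P i) i
      = (\<Sum>j<n. dist (Z j) (Z (Suc j))) + dist (Z n) (P (Suc n))"
    unfolding cost_def Suc by (simp add: sum.lessThan_Suc)
  thus ?thesis using claim[of n] Suc by simp
qed

end
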